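(* Let $\mathcal{H}$ be a separable infinite-dimensional complex Hilbert space, let $T\in\mathscr{B}(\mathcal{H})$ have dense range and let $x_0\in\mathcal{H}$ be nonzero. Then the map $\varepsilon\mapsto y_{x_0,\varepsilon}$, from the interval $]0,\|x_0\|[$ to $\mathcal{H}$, is (real-)analytic.
   Context: For $T\in\mathscr{B}(\mathcal{H})$ with dense range, $x_0\neq 0$ and $0<\varepsilon<\|x_0\|$, the extremal vector $y_{x_0,\varepsilon}$ is the unique vector $y_0\in\mathcal{H}$ with $\|Ty_0-x_0\|\leqslant\varepsilon$ and $\|y_0\|=\inf\{\|y\|:\|Ty-x_0\|\leqslant\varepsilon\}$. *)

theory Defs
  imports "HOL-Analysis.Analysis"
begin

text \<open>A complex Hilbert space: a real Hilbert space (norm induced by the real part of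
  the inner product) equipped with a complex scalar multiplication extending the real one
  and compatible with the norm. By polarization this is exactly a complex Hilbert space.\<close>

class complex_hilbert = real_inner + complete_space +
  fixes scaleC :: "complex \<Rightarrow> 'a \<Rightarrow> 'a" (infixr \<open>*\<^sub>C\<close> 75)
  assumes scaleC_of_real: "scaleC (complex_of_real r) x = r *\<^sub>R x"
    and scaleC_add_right: "scaleC a (x + y) = scaleC a x + scaleC a y"
    and scaleC_add_left: "scaleC (a + b) x = scaleC a x + scaleC b x"
    and scaleC_scaleC: "scaleC a (scaleC b x) = scaleC (a * b) x"
    and norm_scaleC: "norm (scaleC a x) = cmod a * norm x"

definition bounded_clinear_op :: "('a::complex_hilbert \<Rightarrow> 'b::complex_hilbert) \<Rightarrow> bool" where
  "bounded_clinear_op T \<longleftrightarrow> bounded_linear T \<and> (\<forall>c x. T (c *\<^sub>C x) = c *\<^sub>C T x)"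

definition separable_space :: "'a::topological_space itself \<Rightarrow> bool" where
  "separable_space _ \<longleftrightarrow> (\<exists>D::'a set. countable D \<and> closure D = UNIV)"

definition infinite_dimensional :: "'a::real_vector itself \<Rightarrow> bool" where
  "infinite_dimensional _ \<longleftrightarrow> \<not> (\<exists>S::'a set. finite S \<and> span S = UNIV)"

definition extremal_vector :: "('a::real_normed_vector \<Rightarrow> 'b::real_normed_vector) \<Rightarrow> 'b \<Rightarrow> real \<Rightarrow> 'a" where
  "extremal_vector T x0 \<epsilon> =
     (THE y0. norm (T y0 - x0) \<le> \<epsilon> \<and> norm y0 = Inf {norm y | y. norm (T y - x0) \<le> \<epsilon>})"

definition real_analytic_on :: "(real \<Rightarrow> 'a::real_normed_vector) \<Rightarrow> real set \<Rightarrow> bool" where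
  "real_analytic_on f S \<longleftrightarrow>
     (\<forall>t0\<in>S. \<exists>r>0. \<exists>a::nat \<Rightarrow> 'a.
        \<forall>t. \<bar>t - t0\<bar> < r \<longrightarrow> (\<lambda>n. ((t - t0) ^ n) *\<^sub>R a n) sums f t)"

end

theory Submission
  imports Defs "HOL-Complex_Analysis.Complex_Analysis"
begin

lemma quad_expand:
  fixes T :: "'a::real_inner \<Rightarrow> 'b::real_inner" and f :: "'a \<Rightarrow> real"
  assumes "bounded_linear T" "bounded_linear f"
  shows "inner (T (y + t *\<^sub>R z)) (T (y + t *\<^sub>R z)) + g * inner (y + t *\<^sub>R z) (y + t *\<^sub>R z) - 2 * f (y + t *\<^sub>R z)
    = (inner (T y) (T y) + g * inner y y - 2 * f y)
      + 2 * t * (inner (T y) (T z) + g * inner y z - f z) + t^2 * (inner (T z) (T z) + g * inner z z)"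
proof -
  interpret T: bounded_linear T by fact
  interpret f: bounded_linear f by fact
  have "T (y + t *\<^sub>R z) = T y + t *\<^sub>R T z" by (simp add: T.add T.scale)
  moreover have "f (y + t *\<^sub>R z) = f y + t * f z" by (simp add: f.add f.scale)
  ultimately show ?thesis
    by (simp add: inner_add_left inner_add_right inner_commute algebra_simps power2_eq_square)
qed

lemma quad_mid:
  fixes T :: "'a::real_inner \<Rightarrow> 'b::real_inner" and f :: "'a \<Rightarrow> real"
  assumes "bounded_linear T" "bounded_linear f"
  shows "(inner (T a) (T a) + g * inner a a - 2 * f a) + (inner (T b) (T b) + g * inner b b - 2 * f b)
     - 2 * (inner (T ((1/2) *\<^sub>R (a + b))) (T ((1/2) *\<^sub>R (a + b))) + g * inner ((1/2) *\<^sub>R (a + b)) ((1/2) *\<^sub>R (a + b)) - 2 * f ((1/2) *\<^sub>R (a + b)))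
     = (inner (T (a - b)) (T (a - b)) + g * inner (a - b) (a - b)) / 2"
proof -
  interpret T: bounded_linear T by fact
  interpret f: bounded_linear f by fact
  show ?thesis
    by (simp add: T.add T.scale T.diff f.add f.scale inner_add_left inner_add_right inner_diff_left inner_diff_right inner_commute algebra_simps)
qed

lemma weak_exists:
  fixes T :: "'a::{real_inner,complete_space} \<Rightarrow> 'b::real_inner" and f :: "'a \<Rightarrow> real"
  assumes bT: "bounded_linear T" and bf: "bounded_linear f" and g: "g > 0"
  shows "\<exists>y. \<forall>z. inner (T y) (T z) + g * inner y z = f z"
proof -
  define Q where "Q = (\<lambda>y. inner (T y) (T y) + g * inner y y - 2 * f y)"
  obtain K where K: "\<And>x. norm (f x) \<le> norm x * K" using bounded_linear.bounded[OF bf] by blast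
  have lowQ: "Q y \<ge> - (K^2 / g)" for y
  proof -
    have "inner (T y) (T y) \<ge> 0" by simp
    moreover have "f y \<le> norm y * K" using K[of y] by simp
    moreover have "g * (norm y)^2 - 2 * (norm y * K) \<ge> - (K^2/g)"
    proof -
      have "0 \<le> (g * norm y - K)^2 / g" using g by simp
      also have "\<dots> = g * (norm y)^2 - 2 * (norm y * K) + K^2/g" using g
        by (simp add: power2_eq_square field_simps)
      finally show ?thesis by simp
    qed
    moreover have "Q y = (norm (T y))^2 + g*(norm y)^2 - 2*f y" unfolding Q_def by (simp add: power2_norm_eq_inner)
    ultimately show ?thesis using zero_le_power2[of "norm (T y)"] by linarith
  qed
  define m where "m = Inf (range Q)"
  have bdd: "bdd_below (range Q)" by (rule bdd_belowI2[of _ "-(K^2/g)"]) (rule lowQ)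
  have mle: "m \<le> Q y" for y unfolding m_def using bdd by (simp add: cInf_lower)
  have "\<exists>y. Q y < m + 1 / (real n + 1)" for n
  proof -
    have "Inf (range Q) < m + 1 / (real n + 1)" unfolding m_def by (simp add: add_pos_pos)
    then show ?thesis using cInf_lessD[of "range Q"] by blast
  qed
  then obtain Y where Y: "\<And>n. Q (Y n) < m + 1 / (real n + 1)" by metis
  have dist_bound: "g * (norm (a - b))^2 \<le> 2 * (Q a + Q b - 2 * m)" for a b
  proof -
    have "Q a + Q b - 2 * Q ((1/2) *\<^sub>R (a + b)) = (inner (T (a - b)) (T (a - b)) + g * inner (a - b) (a - b)) / 2"
      unfolding Q_def by (rule quad_mid[OF bT bf])
    moreover have "inner (T (a - b)) (T (a - b)) \<ge> 0" by simp
    moreover have "m \<le> Q ((1/2) *\<^sub>R (a + b))" by (rule mle)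
    ultimately have "g * inner (a - b) (a - b) \<le> 2 * (Q a + Q b - 2 * m)" by argo
    then show ?thesis by (simp add: power2_norm_eq_inner)
  qed
  have "Cauchy Y"
  proof (rule metric_CauchyI)
    fix e :: real assume e: "e > 0"
    obtain M :: nat where M: "4 / (g * e^2) < real M" using reals_Archimedean2 by blast
    show "\<exists>M. \<forall>p\<ge>M. \<forall>n\<ge>M. dist (Y p) (Y n) < e"
    proof (intro exI allI impI)
      fix p n assume p: "p \<ge> M" and n: "n \<ge> M"
      have "1 / (real p + 1) \<le> 1 / (real M + 1)" using p by (simp add: frac_le)
      moreover have "1 / (real n + 1) \<le> 1 / (real M + 1)" using n by (simp add: frac_le)
      ultimately have "g * (norm (Y p - Y n))^2 < 4 * (1 / (real M + 1))"
        using dist_bound[of "Y p" "Y n"] Y[of p] Y[of n] by argo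
      also have "4 * (1 / (real M + 1)) = 4 / (real M + 1)" by simp
      also have "\<dots> < g * e^2"
      proof -
        have "4 / (g * e^2) < real M + 1" using M by linarith
        then show ?thesis using g e by (simp add: field_simps)
      qed
      finally have "(norm (Y p - Y n))^2 < e^2" using g by simp
      then have "norm (Y p - Y n) < e" using e by (simp add: power_less_imp_less_base)
      then show "dist (Y p) (Y n) < e" by (simp add: dist_norm)
    qed
  qed
  then obtain y where ylim: "Y \<longlonglongrightarrow> y" using Cauchy_convergent_iff convergent_def by blast
  have contQ: "(\<lambda>n. Q (Y n)) \<longlonglongrightarrow> Q y"
    unfolding Q_def
    by (intro tendsto_intros bounded_linear.tendsto[OF bT] bounded_linear.tendsto[OF bf] ylim)
  have "(\<lambda>n. Q (Y n)) \<longlonglongrightarrow> m"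
  proof (rule tendsto_sandwich[of "\<lambda>n. m" _ _ "\<lambda>n. m + 1 / (real n + 1)"])
    show "\<forall>\<^sub>F n in sequentially. m \<le> Q (Y n)" by (simp add: mle)
    show "\<forall>\<^sub>F n in sequentially. Q (Y n) \<le> m + 1 / (real n + 1)" using Y by (simp add: less_imp_le)
    show "(\<lambda>n. m) \<longlonglongrightarrow> m" by simp
    show "(\<lambda>n. m + 1 / (real n + 1)) \<longlonglongrightarrow> m"
      using tendsto_add[OF tendsto_const[of m] LIMSEQ_inverse_real_of_nat] by (simp add: inverse_eq_divide add.commute)
  qed
  then have Qy: "Q y = m" using contQ LIMSEQ_unique by blast
  show ?thesis
  proof (intro exI allI)
    fix z
    define L where "L = inner (T y) (T z) + g * inner y z - f z"
    define M where "M = inner (T z) (T z) + g * inner z z"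
    have M0: "M \<ge> 0" unfolding M_def using g by simp
    define t where "t = - L / (M + 1)"
    have "Q (y + t *\<^sub>R z) = Q y + 2 * t * L + t^2 * M"
      unfolding Q_def L_def M_def by (rule quad_expand[OF bT bf])
    moreover have "Q y \<le> Q (y + t *\<^sub>R z)" using Qy mle by simp
    ultimately have "0 \<le> 2 * t * L + t^2 * M" by simp
    have ts: "t * (M + 1) = - L" unfolding t_def using M0 by simp
    have "(M+1)^2 * (2 * t * L + t^2 * M) = 2 * (M+1) * (t * (M+1)) * L + (t * (M+1))^2 * M"
      by (simp add: algebra_simps power2_eq_square)
    also have "\<dots> = - (L^2 * (M + 2))" unfolding ts by (simp add: algebra_simps power2_eq_square)
    finally have "0 \<le> - (L^2 * (M + 2))"
      using \<open>0 \<le> 2 * t * L + t^2 * M\<close> by (metis zero_le_power2 mult_nonneg_nonneg)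
    then have "L^2 * (M + 2) \<le> 0" by simp
    then have "L = 0" using M0
      by (smt (verit) mult_pos_pos zero_less_power2)
    then show "inner (T y) (T z) + g * inner y z = f z" unfolding L_def by simp
  qed
qed

locale prob =
  fixes T :: "'a::{real_inner,complete_space} \<Rightarrow> 'a" and x0 :: 'a
  assumes bT: "bounded_linear T" and dense: "closure (range T) = UNIV" and x0nz: "x0 \<noteq> 0"
begin

lemma T_lin: "T (a + b) = T a + T b" "T (a - b) = T a - T b" "T (c *\<^sub>R a) = c *\<^sub>R T a" "T 0 = 0" "T (- a) = - T a"
proof -
  interpret L: bounded_linear T by (rule bT)
  show "T (a + b) = T a + T b" "T (a - b) = T a - T b" "T (c *\<^sub>R a) = c *\<^sub>R T a" "T 0 = 0" "T (- a) = - T a"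
    by (simp_all add: L.add L.diff L.scale L.zero L.neg)
qed

lemma bl_x0T: "bounded_linear (\<lambda>z. inner x0 (T z))"
  by (intro bounded_linear_compose[OF bounded_linear_inner_right bT])

lemma bl_inner: "bounded_linear (\<lambda>z. inner w z)"
  by (rule bounded_linear_inner_right)

lemma weak_zero:
  assumes g: "g > 0" and h: "\<And>z. inner (T d) (T z) + g * inner d z = 0"
  shows "d = 0"
proof -
  have "inner (T d) (T d) + g * inner d d = 0" by (rule h)
  moreover have "inner (T d) (T d) \<ge> 0" by simp
  moreover have "inner d d \<ge> 0" by simp
  ultimately have "g * inner d d = 0" using g by (smt (verit) mult_nonneg_nonneg)
  then show ?thesis using g by simp
qed

lemma weak_unique:
  assumes g: "g > 0"
    and ha: "\<And>z. inner (T a) (T z) + g * inner a z = f z"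
    and hb: "\<And>z. inner (T b) (T z) + g * inner b z = f z"
  shows "a = b"
proof -
  have "inner (T (a - b)) (T z) + g * inner (a - b) z = 0" for z
    using ha[of z] hb[of z] by (simp add: T_lin inner_diff_left algebra_simps)
  then have "a - b = 0" using weak_zero g by blast
  then show ?thesis by simp
qed

definition yy :: "real \<Rightarrow> 'a" where
  "yy g = (THE y. \<forall>z. inner (T y) (T z) + g * inner y z = inner x0 (T z))"

lemma yy_eq: assumes "g > 0" shows "inner (T (yy g)) (T z) + g * inner (yy g) z = inner x0 (T z)"
proof -
  obtain y where y: "\<forall>z. inner (T y) (T z) + g * inner y z = inner x0 (T z)"
    using weak_exists[OF bT bl_x0T assms] by blast
  have "yy g = y" unfolding yy_def
  proof (rule the_equality)
    show "\<forall>z. inner (T y) (T z) + g * inner y z = inner x0 (T z)" using y by blast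
    fix y' assume "\<forall>z. inner (T y') (T z) + g * inner y' z = inner x0 (T z)"
    then show "y' = y" using y weak_unique[OF assms, of y' "\<lambda>z. inner x0 (T z)" y] by blast
  qed
  then show ?thesis using y by simp
qed

definition res :: "real \<Rightarrow> 'a \<Rightarrow> 'a" where
  "res g w = (THE u. \<forall>z. inner (T u) (T z) + g * inner u z = inner w z)"

lemma res_eq: assumes "g > 0" shows "inner (T (res g w)) (T z) + g * inner (res g w) z = inner w z"
proof -
  obtain y where y: "\<forall>z. inner (T y) (T z) + g * inner y z = inner w z"
    using weak_exists[OF bT bl_inner assms] by blast
  have "res g w = y" unfolding res_def
  proof (rule the_equality)
    show "\<forall>z. inner (T y) (T z) + g * inner y z = inner w z" using y by blast
    fix y' assume "\<forall>z. inner (T y') (T z) + g * inner y' z = inner w z"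
    then show "y' = y" using y weak_unique[OF assms, of y' "\<lambda>z. inner w z" y] by blast
  qed
  then show ?thesis using y by simp
qed

definition J :: "real \<Rightarrow> 'a \<Rightarrow> real" where
  "J g y = (norm (T y - x0))^2 + g * (norm y)^2"

lemma J_expand:
  assumes g: "g > 0"
  shows "J g (yy g + z) = J g (yy g) + (norm (T z))^2 + g * (norm z)^2"
proof -
  have e: "inner (T (yy g)) (T z) + g * inner (yy g) z = inner x0 (T z)" by (rule yy_eq[OF g])
  show ?thesis unfolding J_def power2_norm_eq_inner
    using e by (simp add: T_lin inner_add_left inner_add_right inner_diff_left inner_diff_right inner_commute algebra_simps)
qed

lemma J_min: "g > 0 \<Longrightarrow> J g (yy g) \<le> J g y"
  using J_expand[of g "y - yy g"] by (simp add: zero_le_mult_iff)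

definition phi :: "real \<Rightarrow> real" where "phi g = norm (T (yy g) - x0)"

lemma extremal_eq:
  assumes g: "g > 0" and ph: "phi g = e"
  shows "extremal_vector T x0 e = yy g"
proof -
  let ?y0 = "yy g"
  have key: "g * (norm y)^2 \<ge> g * (norm ?y0)^2 + g * (norm (y - ?y0))^2" if y: "norm (T y - x0) \<le> e" for y
  proof -
    have "J g y = J g ?y0 + (norm (T (y - ?y0)))^2 + g * (norm (y - ?y0))^2"
      using J_expand[OF g, of "y - ?y0"] by simp
    moreover have "J g y \<le> e^2 + g * (norm y)^2" unfolding J_def
      using y power_mono[OF y, of 2] by simp
    moreover have "J g ?y0 = e^2 + g * (norm ?y0)^2" unfolding J_def using ph phi_def by simp
    ultimately show ?thesis using zero_le_power2[of "norm (T (y - ?y0))"] by linarith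
  qed
  have ge: "norm ?y0 \<le> norm y" if "norm (T y - x0) \<le> e" for y
  proof -
    have "g * (norm ?y0)^2 \<le> g * (norm y)^2" using key[OF that] g by (smt (verit) mult_nonneg_nonneg zero_le_power2 less_imp_le)
    then have "(norm ?y0)^2 \<le> (norm y)^2" using g by simp
    then show ?thesis by (simp add: power2_le_iff_abs_le)
  qed
  have y0in: "norm (T ?y0 - x0) \<le> e" using ph phi_def by simp
  have inf: "Inf {norm y | y. norm (T y - x0) \<le> e} = norm ?y0"
    by (rule cInf_eq_minimum) (use y0in ge in auto)
  show ?thesis unfolding extremal_vector_def inf
  proof (rule the_equality)
    show "norm (T ?y0 - x0) \<le> e \<and> norm ?y0 = norm ?y0" using y0in by simp
    fix y assume h: "norm (T y - x0) \<le> e \<and> norm y = norm ?y0"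
    have "g * (norm (y - ?y0))^2 \<le> 0" using key[of y] h by simp
    then have "norm (y - ?y0) = 0" using g by (simp add: mult_le_0_iff)
    then show "y = ?y0" by simp
  qed
qed

lemma yy_nz: assumes g: "g > 0" shows "yy g \<noteq> 0"
proof
  assume "yy g = 0"
  then have "inner x0 (T z) = 0" for z using yy_eq[OF g, of z] by (simp add: T_lin)
  then have "range T \<subseteq> {w. inner x0 w = 0}" by auto
  then have "closure (range T) \<subseteq> {w. inner x0 w = 0}"
    by (rule closure_minimal) (rule closed_hyperplane)
  then have "x0 \<in> {w. inner x0 w = 0}" using dense by (metis UNIV_I subsetD)
  then have "inner x0 x0 = 0" by simp
  then show False using x0nz by simp
qed

end

context prob begin

definition KT where "KT = onorm T"
lemma KT: "norm (T x) \<le> KT * norm x" "KT \<ge> 0"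
  unfolding KT_def using onorm[OF bT] onorm_pos_le[OF bT] by auto

lemma yy_bound: assumes g: "g > 0" shows "norm (yy g) \<le> norm x0 * KT / g"
proof -
  let ?y = "yy g"
  have e: "inner (T ?y) (T ?y) + g * inner ?y ?y = inner x0 (T ?y)" by (rule yy_eq[OF g])
  have "inner x0 (T ?y) \<le> norm x0 * norm (T ?y)" by (rule norm_cauchy_schwarz)
  also have "\<dots> \<le> norm x0 * (KT * norm ?y)" using KT(1) by (simp add: mult_left_mono)
  finally have c: "inner x0 (T ?y) \<le> norm x0 * KT * norm ?y" by (simp add: mult.assoc)
  have tt: "0 \<le> inner (T ?y) (T ?y)" by simp
  have "g * inner ?y ?y \<le> norm x0 * KT * norm ?y" using e tt c by linarith
  then have "g * (norm ?y)^2 \<le> norm x0 * KT * norm ?y" by (simp add: power2_norm_eq_inner)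
  then have "g * norm ?y \<le> norm x0 * KT \<or> norm ?y = 0"
    by (cases "norm ?y = 0") (auto simp: power2_eq_square)
  then have "g * norm ?y \<le> norm x0 * KT" using KT(2) by auto
  then show ?thesis using g by (simp add: field_simps)
qed

lemma yy_diff: assumes g: "g > 0" and g': "g' > 0"
  shows "g * norm (yy g - yy g') \<le> \<bar>g' - g\<bar> * norm (yy g')"
proof -
  let ?y = "yy g" and ?y' = "yy g'"
  define d where "d = ?y - ?y'"
  have e1: "inner (T ?y) (T d) + g * inner ?y d = inner x0 (T d)" by (rule yy_eq[OF g])
  have e2: "inner (T ?y') (T d) + g' * inner ?y' d = inner x0 (T d)" by (rule yy_eq[OF g'])
  have "inner (T d) (T d) + g * inner d d = (g' - g) * inner ?y' d"
    using e1 e2 unfolding d_def by (simp add: T_lin inner_diff_left algebra_simps)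
  moreover have "(g' - g) * inner ?y' d \<le> \<bar>g' - g\<bar> * norm ?y' * norm d"
  proof -
    have "(g' - g) * inner ?y' d \<le> \<bar>(g' - g) * inner ?y' d\<bar>" by simp
    also have "\<dots> = \<bar>g' - g\<bar> * \<bar>inner ?y' d\<bar>" by (simp add: abs_mult)
    also have "\<dots> \<le> \<bar>g' - g\<bar> * (norm ?y' * norm d)" by (rule mult_left_mono[OF Cauchy_Schwarz_ineq2]) simp
    finally show ?thesis by (simp add: mult.assoc)
  qed
  moreover have "0 \<le> inner (T d) (T d)" by simp
  ultimately have "g * inner d d \<le> \<bar>g' - g\<bar> * norm ?y' * norm d" by linarith
  then have "g * (norm d)^2 \<le> \<bar>g' - g\<bar> * norm ?y' * norm d" by (simp add: power2_norm_eq_inner)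
  then have "g * norm d \<le> \<bar>g' - g\<bar> * norm ?y' \<or> norm d = 0"
    by (cases "norm d = 0") (auto simp: power2_eq_square)
  then show ?thesis unfolding d_def using g by auto
qed

lemma yy_lip: assumes a: "a > 0" and g: "g \<ge> a" and g': "g' \<ge> a"
  shows "norm (yy g - yy g') \<le> (norm x0 * KT / a^2) * \<bar>g - g'\<bar>"
proof -
  have gp: "g > 0" "g' > 0" using a g g' by auto
  have "a * norm (yy g - yy g') \<le> g * norm (yy g - yy g')" using g by (simp add: mult_right_mono)
  also have "\<dots> \<le> \<bar>g' - g\<bar> * norm (yy g')" by (rule yy_diff[OF gp])
  also have "\<dots> \<le> \<bar>g' - g\<bar> * (norm x0 * KT / a)"
  proof -
    have "norm (yy g') \<le> norm x0 * KT / g'" by (rule yy_bound[OF gp(2)])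
    also have "\<dots> \<le> norm x0 * KT / a" using a g' KT(2) by (simp add: frac_le)
    finally have "norm (yy g') \<le> norm x0 * KT / a" .
    then show ?thesis by (rule mult_left_mono) simp
  qed
  finally show ?thesis using a by (simp add: field_simps power2_eq_square abs_minus_commute)
qed

lemma yy_cont: assumes a: "a > 0" shows "continuous_on {a..} yy"
proof (rule lipschitz_on_continuous_on)
  show "(norm x0 * KT / a^2)-lipschitz_on {a..} yy"
    by (rule lipschitz_onI) (use yy_lip[OF a] KT(2) in \<open>auto simp: dist_norm\<close>)
qed

lemma phi_cont: assumes a: "a > 0" shows "continuous_on {a..b} phi"
proof -
  have "continuous_on {a..b} yy" using yy_cont[OF a] by (rule continuous_on_subset) auto
  then show ?thesis unfolding phi_def
    by (intro continuous_intros continuous_on_compose2[OF linear_continuous_on[OF bT]]) auto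
qed

lemma phi_small: assumes e: "e > 0" shows "\<exists>g>0. phi g < e"
proof -
  have "x0 \<in> closure (range T)" using dense by simp
  then obtain y1 where y1: "dist (T y1) x0 < e / 2" using e closure_approachable[of x0 "range T"]
    by (metis half_gt_zero rangeE)
  define N where "N = (norm y1)^2 + 1"
  have N0: "N > 0" unfolding N_def by (intro add_nonneg_pos) auto
  define g where "g = e^2 / (4 * N)"
  have g0: "g > 0" unfolding g_def using e N0 by simp
  have "(phi g)^2 \<le> J g (yy g)" unfolding J_def phi_def using g0 by simp
  also have "\<dots> \<le> J g y1" by (rule J_min[OF g0])
  also have "\<dots> = (norm (T y1 - x0))^2 + g * (norm y1)^2" by (simp add: J_def)
  also have "\<dots> < e^2 / 4 + e^2 / 4"
  proof -
    have "(norm (T y1 - x0))^2 < (e/2)^2" using y1 by (simp add: dist_norm power_strict_mono)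
    moreover have "g * (norm y1)^2 \<le> e^2/4"
    proof -
      have "g * (norm y1)^2 \<le> g * N" using g0 unfolding N_def by simp
      also have "\<dots> = e^2/4" unfolding g_def using N0 by (simp add: field_simps)
      finally show ?thesis .
    qed
    ultimately show ?thesis by (simp add: power_divide)
  qed
  also have "\<dots> < e^2" using e by simp
  finally have "(phi g)^2 < e^2" .
  then have "phi g < e" using e by (simp add: power_less_imp_less_base)
  then show ?thesis using g0 by blast
qed

lemma phi_large: assumes e: "e < norm x0" shows "\<exists>G>0. \<forall>g\<ge>G. phi g > e"
proof -
  define G where "G = (KT * KT * norm x0 + 1) / (norm x0 - e)"
  have d: "norm x0 - e > 0" using e by simp
  have G0: "G > 0" unfolding G_def using d KT(2) by (simp add: add_nonneg_pos)
  have "phi g > e" if g: "g \<ge> G" for g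
  proof -
    have gp: "g > 0" using G0 g by simp
    have "norm (T (yy g)) \<le> KT * (norm x0 * KT / g)"
      using KT(1)[of "yy g"] yy_bound[OF gp] KT(2) by (meson mult_left_mono order.trans)
    also have "\<dots> = KT * KT * norm x0 / g" by simp
    also have "\<dots> \<le> KT * KT * norm x0 / G" using G0 g KT(2) by (simp add: frac_le)
    also have "\<dots> < norm x0 - e"
    proof -
      have "KT * KT * norm x0 < KT * KT * norm x0 + 1" by simp
      then have "KT * KT * norm x0 < G * (norm x0 - e)" unfolding G_def using d by simp
      then show ?thesis using G0 by (simp add: field_simps)
    qed
    finally have "norm (T (yy g)) < norm x0 - e" .
    moreover have "norm x0 - norm (T (yy g)) \<le> norm (T (yy g) - x0)"
      by (metis norm_minus_commute norm_triangle_ineq2)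
    ultimately show ?thesis unfolding phi_def by simp
  qed
  then show ?thesis using G0 by blast
qed

lemma exists_gamma: assumes e: "0 < e" "e < norm x0" shows "\<exists>g>0. phi g = e"
proof -
  obtain g1 where g1: "g1 > 0" "phi g1 < e" using phi_small[OF e(1)] by blast
  obtain G where G: "G > 0" "\<And>g. g \<ge> G \<Longrightarrow> phi g > e" using phi_large[OF e(2)] by blast
  define g2 where "g2 = max G g1"
  have "phi g2 > e" using G(2)[of g2] unfolding g2_def by simp
  then obtain g where "g1 \<le> g" "g \<le> g2" "phi g = e"
    using IVT'[of phi g1 e g2] g1 phi_cont[OF g1(1), of g2] unfolding g2_def by force
  then have "g > 0" "phi g = e" using g1 by auto
  then show ?thesis by blast
qed

end

context prob begin

definition kk :: "real \<Rightarrow> real" where "kk g = (norm x0)^2 - inner x0 (T (yy g))"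

lemma kk_diff: assumes g: "g > 0" and g': "g' > 0"
  shows "kk g' - kk g = (g' - g) * inner (yy g) (yy g')"
proof -
  have e1: "inner (T (yy g)) (T (yy g')) + g * inner (yy g) (yy g') = inner x0 (T (yy g'))" by (rule yy_eq[OF g])
  have e2: "inner (T (yy g')) (T (yy g)) + g' * inner (yy g') (yy g) = inner x0 (T (yy g))" by (rule yy_eq[OF g'])
  show ?thesis unfolding kk_def using e1 e2 by (simp add: inner_commute algebra_simps)
qed

lemma phi_sq: assumes g: "g > 0" shows "(phi g)^2 = kk g - g * (norm (yy g))^2"
proof -
  have e: "inner (T (yy g)) (T (yy g)) + g * inner (yy g) (yy g) = inner x0 (T (yy g))" by (rule yy_eq[OF g])
  show ?thesis unfolding phi_def kk_def power2_norm_eq_inner using e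
    by (simp add: inner_diff_left inner_diff_right inner_commute algebra_simps)
qed

lemma kk_deriv: assumes g: "g > 0" shows "(kk has_real_derivative (norm (yy g))^2) (at g)"
proof -
  have "g \<in> interior {g/2..}" using g by (simp add: interior_real_atLeast)
  then have "isCont yy g" using continuous_on_interior[OF yy_cont[of "g/2"]] g by simp
  then have "yy \<midarrow>g\<rightarrow> yy g" by (simp add: isCont_def)
  then have lim: "((\<lambda>y. inner (yy g) (yy y)) \<longlongrightarrow> (norm (yy g))^2) (at g)"
    using tendsto_inner[OF tendsto_const[of "yy g"]] by (simp add: power2_norm_eq_inner)
  have ev: "eventually (\<lambda>y. inner (yy g) (yy y) = (kk y - kk g) / (y - g)) (at g)"
    unfolding eventually_at
  proof (intro exI[of _ g] conjI allI ballI impI)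
    show "g > 0" by (rule g)
    fix y :: real assume "y \<noteq> g \<and> dist y g < g"
    then have "y > 0" "y \<noteq> g" by (auto simp: dist_real_def)
    then show "inner (yy g) (yy y) = (kk y - kk g) / (y - g)" using kk_diff[OF g, of y] by simp
  qed
  show ?thesis unfolding has_field_derivative_iff by (rule Lim_transform_eventually[OF lim ev])
qed

end

locale prob0 = prob T x0 for T :: "'a::{real_inner,banach} \<Rightarrow> 'a" and x0 +
  fixes g0 :: real assumes g0: "g0 > 0"
begin

definition u :: "nat \<Rightarrow> 'a" where "u n = (res g0 ^^ n) (yy g0)"

lemma u_0: "u 0 = yy g0" and u_Suc: "u (Suc n) = res g0 (u n)" by (simp_all add: u_def)

lemma u_eq0: "inner (T (u 0)) (T z) + g0 * inner (u 0) z = inner x0 (T z)"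
  unfolding u_0 by (rule yy_eq[OF g0])
lemma u_eqS: "inner (T (u (Suc n))) (T z) + g0 * inner (u (Suc n)) z = inner (u n) z"
  unfolding u_Suc by (rule res_eq[OF g0])

lemma u_norm_step: "g0 * norm (u (Suc n)) \<le> norm (u n)"
proof -
  let ?v = "u (Suc n)"
  have e: "inner (T ?v) (T ?v) + g0 * inner ?v ?v = inner (u n) ?v" by (rule u_eqS)
  have "inner (u n) ?v \<le> norm (u n) * norm ?v" by (rule norm_cauchy_schwarz)
  moreover have "0 \<le> inner (T ?v) (T ?v)" by simp
  ultimately have "g0 * inner ?v ?v \<le> norm (u n) * norm ?v" using e by linarith
  then have *: "(g0 * norm ?v) * norm ?v \<le> norm (u n) * norm ?v"
    by (simp add: power2_norm_eq_inner[symmetric] power2_eq_square mult.assoc)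
  show ?thesis
  proof (cases "norm ?v = 0")
    case True then show ?thesis by simp
  next
    case False then have "norm ?v > 0" by simp
    then show ?thesis using mult_right_le_imp_le[OF *] by blast
  qed
qed

lemma u_norm: "norm (u n) \<le> norm (u 0) / g0^n"
proof (induction n)
  case 0 then show ?case by simp
next
  case (Suc n)
  have "norm (u (Suc n)) \<le> norm (u n) / g0" using u_norm_step[of n] g0 by (simp add: field_simps)
  also have "\<dots> \<le> (norm (u 0) / g0^n) / g0" by (rule divide_right_mono[OF Suc.IH]) (use g0 in simp)
  finally show ?case by (simp add: divide_divide_eq_left mult.commute)
qed

lemma y_series: assumes g: "\<bar>g - g0\<bar> < g0" shows "(\<lambda>n. (g0 - g)^n *\<^sub>R u n) sums yy g"
proof -
  define c where "c = g0 - g"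
  have gp: "g > 0" using g by auto
  have q: "norm (\<bar>c\<bar> / g0) < 1" using g g0 by (simp add: c_def abs_minus_commute)
  have bnd: "norm ((c^n) *\<^sub>R u n) \<le> norm (u 0) * (\<bar>c\<bar>/g0)^n" for n
  proof -
    have "norm (c^n *\<^sub>R u n) = \<bar>c\<bar>^n * norm (u n)" by (simp add: power_abs)
    also have "\<dots> \<le> \<bar>c\<bar>^n * (norm (u 0) / g0^n)" by (rule mult_left_mono[OF u_norm]) simp
    also have "\<dots> = norm (u 0) * (\<bar>c\<bar>/g0)^n" by (simp add: power_divide)
    finally show ?thesis .
  qed
  have sn: "summable (\<lambda>n. norm (c^n *\<^sub>R u n))"
    by (rule summable_comparison_test'[where N=0, OF summable_mult[OF summable_geometric[OF q]]]) (use bnd in auto)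
  then have sm: "summable (\<lambda>n. c^n *\<^sub>R u n)" by (rule summable_norm_cancel)
  define s where "s = suminf (\<lambda>n. c^n *\<^sub>R u n)"
  have ss: "(\<lambda>n. c^n *\<^sub>R u n) sums s" using sm s_def summable_sums by blast
  have "inner (T s) (T z) + g * inner s z = inner x0 (T z)" for z
  proof -
    have bl1: "bounded_linear (\<lambda>x. inner (T x) (T z))"
      by (rule bounded_linear_compose[OF bounded_linear_inner_left bT])
    have s1: "(\<lambda>n. c^n * inner (T (u n)) (T z)) sums inner (T s) (T z)"
      using bounded_linear.sums[OF bl1 ss] by (simp add: T_lin)
    have s2: "(\<lambda>n. c^n * inner (u n) z) sums inner s z"
      using bounded_linear.sums[OF bounded_linear_inner_left ss] by simp
    define a where "a n = c^n * (inner (T (u n)) (T z) + g0 * inner (u n) z)" for n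
    have sa: "a sums (inner (T s) (T z) + g0 * inner s z)"
      unfolding a_def using sums_add[OF s1 sums_mult[OF s2, of g0]] by (simp add: algebra_simps)
    have "(\<lambda>n. a (Suc n)) sums (c * inner s z)"
      unfolding a_def u_eqS using sums_mult[OF s2, of c] by (simp add: algebra_simps)
    then have "a sums (c * inner s z + a 0)" by (simp add: sums_Suc_iff)
    moreover have "a 0 = inner x0 (T z)" unfolding a_def using u_eq0 by simp
    ultimately have "inner (T s) (T z) + g0 * inner s z = c * inner s z + inner x0 (T z)"
      using sa sums_unique2 by metis
    then show ?thesis unfolding c_def by (simp add: algebra_simps)
  qed
  then have "s = yy g" by (rule weak_unique[OF gp, where f="\<lambda>z. inner x0 (T z)"]) (rule yy_eq[OF gp])
  then show ?thesis using ss c_def by simp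
qed

definition b :: "nat \<Rightarrow> real" where "b n = inner x0 (T (u n))"

lemma b_series: assumes g: "\<bar>g - g0\<bar> < g0" shows "(\<lambda>n. (g0 - g)^n * b n) sums inner x0 (T (yy g))"
  using bounded_linear.sums[OF bl_x0T y_series[OF g]] by (simp add: T_lin b_def)

lemma b_Suc: "b (Suc n) = inner (u 0) (u n)"
proof -
  have "b (Suc n) = inner (T (u 0)) (T (u (Suc n))) + g0 * inner (u 0) (u (Suc n))"
    unfolding b_def using u_eq0 by simp
  also have "\<dots> = inner (T (u (Suc n))) (T (u 0)) + g0 * inner (u (Suc n)) (u 0)"
    by (simp add: inner_commute)
  also have "\<dots> = inner (u n) (u 0)" by (rule u_eqS)
  finally show ?thesis by (simp add: inner_commute)
qed

lemma b_bound: "\<bar>b n\<bar> \<le> norm x0 * KT * norm (u 0) / g0^n"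
proof -
  have "\<bar>b n\<bar> \<le> norm x0 * norm (T (u n))" unfolding b_def by (rule Cauchy_Schwarz_ineq2)
  also have "\<dots> \<le> norm x0 * (KT * norm (u n))" by (rule mult_left_mono[OF KT(1)]) simp
  also have "\<dots> \<le> norm x0 * (KT * (norm (u 0) / g0^n))"
    by (intro mult_left_mono[OF mult_left_mono[OF u_norm]] KT(2)) simp
  finally show ?thesis by simp
qed

lemma b2_pos: "b 2 > 0"
proof -
  have u0: "u 0 \<noteq> 0" using yy_nz[OF g0] u_0 by simp
  have u1: "u 1 \<noteq> 0"
  proof
    assume "u 1 = 0"
    then have "inner (u 0) (u 0) = 0" using u_eqS[of 0 "u 0"] by (simp add: T_lin)
    then show False using u0 by simp
  qed
  have "b 2 = inner (u 0) (u 1)" using b_Suc[of 1] by (simp add: numeral_2_eq_2)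
  also have "\<dots> = inner (T (u 1)) (T (u 1)) + g0 * inner (u 1) (u 1)"
    using u_eqS[of 0 "u 1"] by (simp add: inner_commute)
  finally show ?thesis using u1 g0
    by (smt (verit) inner_gt_zero_iff inner_ge_zero mult_pos_pos)
qed

end

context prob0 begin

definition acoef :: "nat \<Rightarrow> real" where
  "acoef n = (if n = 0 then (norm x0)^2 else 0) - (-1)^n * b n"
definition F :: "complex fps" where "F = Abs_fps (\<lambda>n. complex_of_real (acoef n))"
definition Cb where "Cb = (norm x0)^2 + norm x0 * KT * norm (u 0)"

lemma acoef_bound: "\<bar>acoef n\<bar> \<le> Cb / g0^n"
proof -
  have bb: "\<bar>b n\<bar> \<le> norm x0 * KT * norm (u 0) / g0^n" by (rule b_bound)
  have nn: "0 \<le> norm x0 * KT * norm (u 0)" using KT(2) by simp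
  show ?thesis
  proof (cases "n = 0")
    case True
    have "\<bar>(norm x0)^2 - b 0\<bar> \<le> \<bar>(norm x0)^2\<bar> + \<bar>b 0\<bar>" by (rule abs_triangle_ineq4)
    then have "\<bar>(norm x0)^2 - b 0\<bar> \<le> (norm x0)^2 + \<bar>b 0\<bar>" by simp
    then show ?thesis using bb True unfolding acoef_def Cb_def by simp
  next
    case False
    then have "\<bar>acoef n\<bar> = \<bar>b n\<bar>" unfolding acoef_def by (simp add: abs_mult)
    also have "\<dots> \<le> norm x0 * KT * norm (u 0) / g0^n" by (rule bb)
    also have "\<dots> \<le> Cb / g0^n" unfolding Cb_def using g0 by (simp add: divide_right_mono)
    finally show ?thesis .
  qed
qed

lemma kk_series: assumes g: "\<bar>g - g0\<bar> < g0" shows "(\<lambda>n. acoef n * (g - g0)^n) sums kk g"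
proof -
  have s1: "(\<lambda>n. if n = 0 then (norm x0)^2 else 0) sums (norm x0)^2"
    using sums_single[of 0 "\<lambda>_. (norm x0)^2"] by simp
  have s2: "(\<lambda>n. (g0 - g)^n * b n) sums inner x0 (T (yy g))" by (rule b_series[OF g])
  have eq: "(g0 - g)^n = (-1)^n * (g - g0)^n" for n
    by (metis minus_diff_eq power_minus)
  have "(\<lambda>n. (if n = 0 then (norm x0)^2 else 0) - (g0 - g)^n * b n) sums ((norm x0)^2 - inner x0 (T (yy g)))"
    by (rule sums_diff[OF s1 s2])
  moreover have "(\<lambda>n. (if n = 0 then (norm x0)^2 else 0) - (g0 - g)^n * b n) = (\<lambda>n. acoef n * (g - g0)^n)"
    by (rule ext) (simp add: acoef_def eq algebra_simps)
  ultimately show ?thesis unfolding kk_def by simp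
qed

lemma F_radius: "fps_conv_radius F \<ge> ereal g0"
  unfolding fps_conv_radius_def
proof (rule conv_radius_geI_ex')
  fix r :: real assume r: "0 < r" "ereal r < ereal g0"
  then have rg: "r / g0 < 1" "0 \<le> r / g0" using g0 by auto
  show "summable (\<lambda>n. fps_nth F n * of_real r ^ n)"
  proof (rule summable_comparison_test'[where N=0])
    show "summable (\<lambda>n. Cb * (r/g0)^n)" using rg by (intro summable_mult summable_geometric) simp
    fix n :: nat
    have "norm (fps_nth F n * of_real r ^ n) = \<bar>acoef n\<bar> * r^n"
      unfolding F_def using r by (simp add: norm_mult norm_power)
    also have "\<dots> \<le> (Cb / g0^n) * r^n" by (rule mult_right_mono[OF acoef_bound]) (use r in simp)
    also have "\<dots> = Cb * (r/g0)^n" by (simp add: power_divide)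
    finally show "norm (fps_nth F n * of_real r ^ n) \<le> Cb * (r/g0)^n" .
  qed
qed

definition K :: "complex \<Rightarrow> complex" where "K z = eval_fps F (z - of_real g0)"
definition K1 :: "complex \<Rightarrow> complex" where "K1 z = eval_fps (fps_deriv F) (z - of_real g0)"
definition K2 :: "complex \<Rightarrow> complex" where "K2 z = eval_fps (fps_deriv (fps_deriv F)) (z - of_real g0)"

lemma in_rad:
  assumes z: "z \<in> ball (of_real g0) g0"
  shows "ereal (norm (z - of_real g0)) < fps_conv_radius F"
    "ereal (norm (z - of_real g0)) < fps_conv_radius (fps_deriv F)"
    "ereal (norm (z - of_real g0)) < fps_conv_radius (fps_deriv (fps_deriv F))"
proof -
  have "norm (z - of_real g0) < g0" using z by (simp add: dist_norm norm_minus_commute)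
  then have a: "ereal (norm (z - of_real g0)) < ereal g0" by simp
  show "ereal (norm (z - of_real g0)) < fps_conv_radius F" using a F_radius by (rule less_le_trans)
  show "ereal (norm (z - of_real g0)) < fps_conv_radius (fps_deriv F)"
    using a F_radius fps_conv_radius_deriv[of F] by (meson less_le_trans order.trans)
  show "ereal (norm (z - of_real g0)) < fps_conv_radius (fps_deriv (fps_deriv F))"
    using a F_radius fps_conv_radius_deriv[of F] fps_conv_radius_deriv[of "fps_deriv F"]
    by (meson less_le_trans order.trans)
qed

lemma shift_deriv: "((\<lambda>z. z - complex_of_real g0) has_field_derivative 1) (at z)"
  by (auto intro!: derivative_eq_intros)

lemma K_deriv: assumes z: "z \<in> ball (of_real g0) g0" shows "(K has_field_derivative K1 z) (at z)"
  using DERIV_chain2[OF has_field_derivative_eval_fps[OF in_rad(1)[OF z]] shift_deriv]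
  unfolding K_def K1_def by simp

lemma K1_deriv: assumes z: "z \<in> ball (of_real g0) g0" shows "(K1 has_field_derivative K2 z) (at z)"
  using DERIV_chain2[OF has_field_derivative_eval_fps[OF in_rad(2)[OF z]] shift_deriv]
  unfolding K1_def K2_def by simp

definition H :: "complex \<Rightarrow> complex" where "H z = K z - z * K1 z"

lemma H_deriv: assumes z: "z \<in> ball (of_real g0) g0" shows "(H has_field_derivative (- z * K2 z)) (at z)"
proof -
  have "((\<lambda>z. K z - z * K1 z) has_field_derivative (K1 z - (1 * K1 z + K2 z * z))) (at z)"
    by (rule DERIV_diff[OF K_deriv[OF z] DERIV_mult[OF DERIV_ident K1_deriv[OF z]]])
  then show ?thesis unfolding H_def by (rule DERIV_cong) (simp add: algebra_simps)
qed

lemma H_holo: "H holomorphic_on ball (of_real g0) g0"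
  unfolding holomorphic_on_open[OF open_ball] using H_deriv by blast

lemma H_deriv0: "deriv H (of_real g0) = of_real (2 * g0 * b 2)"
proof -
  have c: "of_real g0 \<in> ball (complex_of_real g0) g0" using g0 by simp
  have "deriv H (of_real g0) = - of_real g0 * K2 (of_real g0)" by (rule DERIV_imp_deriv[OF H_deriv[OF c]])
  also have "K2 (of_real g0) = of_real (2 * acoef 2)"
    unfolding K2_def by (simp add: eval_fps_at_0 F_def numeral_2_eq_2)
  also have "acoef 2 = - b 2" unfolding acoef_def by simp
  finally show ?thesis by simp
qed

lemma H_deriv0_nz: "deriv H (of_real g0) \<noteq> 0"
  using H_deriv0 b2_pos g0 by simp

lemma K_real: assumes g: "\<bar>g - g0\<bar> < g0" shows "K (of_real g) = of_real (kk g)"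
proof -
  have "(\<lambda>n. complex_of_real (acoef n * (g - g0)^n)) sums of_real (kk g)"
    using kk_series[OF g] by (simp only: sums_of_real_iff)
  moreover have "(\<lambda>n. complex_of_real (acoef n * (g - g0)^n)) = (\<lambda>n. fps_nth F n * (of_real g - of_real g0)^n)"
    by (rule ext) (simp add: F_def)
  ultimately show ?thesis unfolding K_def eval_fps_def by (simp add: sums_iff)
qed

lemma K1_real: assumes g: "\<bar>g - g0\<bar> < g0" shows "K1 (of_real g) = of_real ((norm (yy g))^2)"
proof -
  have gp: "g > 0" using g by auto
  have "cmod (of_real g0 - of_real g) = \<bar>g0 - g\<bar>" by (metis norm_of_real of_real_diff)
  then have z: "complex_of_real g \<in> ball (of_real g0) g0" using g by (simp add: dist_norm abs_minus_commute)
  have d1: "((\<lambda>t. K (of_real t)) has_vector_derivative K1 (of_real g)) (at g)"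
    by (rule has_vector_derivative_real_field[OF K_deriv[OF z]])
  have d2: "((\<lambda>t. complex_of_real (kk t)) has_vector_derivative of_real ((norm (yy g))^2)) (at g)"
    by (rule has_vector_derivative_of_real[OF kk_deriv[OF gp]])
  have d3: "((\<lambda>t. K (of_real t)) has_vector_derivative of_real ((norm (yy g))^2)) (at g)"
  proof (rule has_vector_derivative_transform_within_open[OF d2, of "ball g0 g0"])
    show "open (ball g0 g0)" by simp
    show "g \<in> ball g0 g0" using g by (simp add: dist_real_def abs_minus_commute)
    fix y assume "y \<in> ball g0 g0"
    then have "\<bar>y - g0\<bar> < g0" by (simp add: dist_real_def abs_minus_commute)
    then show "complex_of_real (kk y) = K (of_real y)" using K_real by simp
  qed
  show ?thesis using vector_derivative_unique_at[OF d1 d3] .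
qed

lemma H_real: assumes g: "\<bar>g - g0\<bar> < g0" shows "H (of_real g) = of_real ((phi g)^2)"
proof -
  have gp: "g > 0" using g by auto
  show ?thesis unfolding H_def K_real[OF g] K1_real[OF g] phi_sq[OF gp] by simp
qed

end

context prob0 begin

lemma cmod_of_real_diff: "cmod (complex_of_real a - of_real c) = \<bar>a - c\<bar>"
  by (metis norm_of_real of_real_diff)

lemma sq_close:
  fixes w :: complex
  assumes e0: "e0 > 0" and rho: "rho \<le> e0" "rho > 0" and w: "cmod (w - of_real e0) < rho"
  shows "cmod (w^2 - of_real (e0^2)) < rho * (3 * e0)"
proof -
  have "w^2 - of_real (e0^2) = (w - of_real e0) * (w + of_real e0)"
    by (simp add: power2_eq_square algebra_simps)
  then have eq: "cmod (w^2 - of_real (e0^2)) = cmod (w - of_real e0) * cmod (w + of_real e0)"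
    by (simp add: norm_mult)
  have "cmod (w + of_real e0) \<le> cmod (w - of_real e0) + cmod (2 * of_real e0)"
    using norm_triangle_ineq[of "w - of_real e0" "2 * of_real e0"] by (simp add: algebra_simps)
  also have "\<dots> < rho + 2 * e0" using w e0 by (simp add: norm_mult)
  also have "\<dots> \<le> 3 * e0" using rho by simp
  finally have b: "cmod (w + of_real e0) < 3 * e0" .
  have "cmod (w - of_real e0) * cmod (w + of_real e0) \<le> cmod (w - of_real e0) * (3 * e0)"
    using b by (intro mult_left_mono) auto
  also have "\<dots> < rho * (3 * e0)" using w e0 by simp
  finally show ?thesis using eq by simp
qed

lemma inverse_local:
  assumes e0pos: "phi g0 > 0"
  obtains rho r Gam where "rho > 0" "r > 0" "r \<le> g0/2" "Gam holomorphic_on ball (of_real (phi g0)) rho"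
    "\<And>w. w \<in> ball (of_real (phi g0)) rho \<Longrightarrow> Gam w \<in> ball (of_real g0) r"
    "\<And>t. \<bar>t - phi g0\<bar> < rho \<Longrightarrow> \<exists>gm. Gam (of_real t) = of_real gm \<and> gm > 0 \<and> phi gm = t"
proof -
  define e0 where "e0 = phi g0"
  have e0: "e0 > 0" using e0pos e0_def by simp
  have cS: "complex_of_real g0 \<in> ball (of_real g0) g0" using g0 by simp
  obtain r1 where r1: "r1 > 0" "ball (complex_of_real g0) r1 \<subseteq> ball (of_real g0) g0" "inj_on H (ball (of_real g0) r1)"
    using has_complex_derivative_locally_injective[OF H_holo cS open_ball H_deriv0_nz] by blast
  define r where "r = min r1 (g0/2)"
  have r: "r > 0" "r \<le> g0/2" "r \<le> r1" using r1 g0 unfolding r_def by auto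
  define S' where "S' = ball (complex_of_real g0) r"
  have S'sub: "S' \<subseteq> ball (of_real g0) g0" using r1(2) r unfolding S'_def by (meson order.trans subset_ball)
  have injS': "inj_on H S'" using r1(3) r unfolding S'_def by (meson inj_on_subset subset_ball)
  have holS': "H holomorphic_on S'" using H_holo S'sub by (rule holomorphic_on_subset)
  have openS': "open S'" unfolding S'_def by simp
  obtain G where G: "G holomorphic_on H ` S'" "\<And>z. z \<in> S' \<Longrightarrow> G (H z) = z"
    using holomorphic_has_inverse[OF holS' openS' injS'] by metis
  have openHS: "open (H ` S')" by (rule open_mapping_thm3[OF holS' openS' injS'])
  have Hg0: "H (of_real g0) = of_real (e0^2)" using H_real[of g0] g0 e0_def by simp
  have "of_real g0 \<in> S'" unfolding S'_def using r by simp
  then have "of_real (e0^2) \<in> H ` S'" using Hg0 by force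
  then obtain rho1 where rho1: "rho1 > 0" "ball (of_real (e0^2)) rho1 \<subseteq> H ` S'"
    using openHS open_contains_ball by blast
  define hh where "hh t = (phi t)^2" for t
  define a where "a = g0 - r/2"
  define c where "c = g0 + r/2"
  have a0: "a > 0" and ac: "a < g0" "g0 < c" using r g0 unfolding a_def c_def by auto
  have in_int: "\<bar>t - g0\<bar> < r" if "a \<le> t" "t \<le> c" for t using that r unfolding a_def c_def by auto
  have Hhh: "H (of_real t) = of_real (hh t)" if "a \<le> t" "t \<le> c" for t
    unfolding hh_def using H_real[of t] in_int[OF that] r by simp
  have inS': "complex_of_real t \<in> S'" if "a \<le> t" "t \<le> c" for t
    unfolding S'_def using in_int[OF that] by (simp add: dist_norm cmod_of_real_diff abs_minus_commute)
  have conthh: "continuous_on {a..c} hh"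
    unfolding hh_def by (intro continuous_intros phi_cont[OF a0])
  have injhh: "inj_on hh {a..c}"
  proof (rule inj_onI)
    fix t1 t2 assume t1: "t1 \<in> {a..c}" and t2: "t2 \<in> {a..c}" and eq: "hh t1 = hh t2"
    have "H (of_real t1) = H (of_real t2)" using Hhh t1 t2 eq by auto
    then have "complex_of_real t1 = of_real t2" using injS' inS' t1 t2 by (auto dest: inj_onD)
    then show "t1 = t2" by simp
  qed
  have hhg0: "hh g0 = e0^2" unfolding hh_def e0_def by simp
  have mono: "(hh a < e0^2 \<and> e0^2 < hh c) \<or> (hh c < e0^2 \<and> e0^2 < hh a)"
    using continuous_inj_imp_mono[OF ac conthh injhh] hhg0 by simp
  define delta where "delta = min rho1 (min \<bar>hh a - e0^2\<bar> \<bar>hh c - e0^2\<bar>)"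
  have delta: "delta > 0" "delta \<le> rho1" using mono rho1 unfolding delta_def by auto
  have realpre: "\<exists>gm. a \<le> gm \<and> gm \<le> c \<and> hh gm = s" if s: "\<bar>s - e0^2\<bar> < delta" for s
  proof -
    have "\<bar>s - e0^2\<bar> < \<bar>hh a - e0^2\<bar>" "\<bar>s - e0^2\<bar> < \<bar>hh c - e0^2\<bar>"
      using s unfolding delta_def by auto
    then have "(hh a \<le> s \<and> s \<le> hh c) \<or> (hh c \<le> s \<and> s \<le> hh a)" using mono by auto
    then show ?thesis
    proof
      assume "hh a \<le> s \<and> s \<le> hh c" then show ?thesis
        using IVT'[of hh a s c] conthh ac by auto
    next
      assume "hh c \<le> s \<and> s \<le> hh a" then show ?thesis
        using IVT2'[of hh c s a] conthh ac by auto
    qed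
  qed
  define rho where "rho = min e0 (delta / (3 * e0))"
  have rho: "rho > 0" "rho \<le> e0" "rho * (3 * e0) \<le> delta"
    using e0 delta unfolding rho_def by (auto simp: min_def field_simps)
  define Gam where "Gam w = G (w^2)" for w
  have sq_in: "w^2 \<in> ball (of_real (e0^2)) delta" if w: "w \<in> ball (of_real e0) rho" for w :: complex
  proof -
    have "cmod (w - of_real e0) < rho" using w by (simp add: dist_norm norm_minus_commute)
    then have "cmod (w^2 - of_real (e0^2)) < rho * (3 * e0)" by (rule sq_close[OF e0 rho(2) rho(1)])
    then show ?thesis using rho(3) by (simp add: dist_norm norm_minus_commute)
  qed
  have sq_HS: "w^2 \<in> H ` S'" if w: "w \<in> ball (of_real e0) rho" for w :: complex
    using sq_in[OF w] rho1(2) delta(2) by (meson subsetD subset_ball)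
  have holGam: "Gam holomorphic_on ball (of_real e0) rho"
  proof -
    have "(G \<circ> (\<lambda>w. w^2)) holomorphic_on ball (of_real e0) rho"
      by (rule holomorphic_on_compose_gen[OF _ G(1)]) (auto intro!: holomorphic_intros sq_HS)
    then show ?thesis unfolding Gam_def o_def .
  qed
  have Gam_in: "Gam w \<in> ball (of_real g0) r" if w: "w \<in> ball (of_real e0) rho" for w :: complex
  proof -
    obtain z where z: "z \<in> S'" "w^2 = H z" using sq_HS[OF w] by blast
    then have "Gam w = z" unfolding Gam_def using G(2) by simp
    then show ?thesis using z S'_def by simp
  qed
  have Gam_real: "\<exists>gm. Gam (of_real t) = of_real gm \<and> gm > 0 \<and> phi gm = t" if t: "\<bar>t - e0\<bar> < rho" for t
  proof -
    have "complex_of_real t \<in> ball (of_real e0) rho" using t by (simp add: dist_norm cmod_of_real_diff abs_minus_commute)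
    then have "(complex_of_real t)^2 \<in> ball (of_real (e0^2)) delta" by (rule sq_in)
    then have "\<bar>t^2 - e0^2\<bar> < delta"
      by (simp add: dist_norm cmod_of_real_diff abs_minus_commute flip: of_real_power)
    then obtain gm where gm: "a \<le> gm" "gm \<le> c" "hh gm = t^2" using realpre by blast
    have "H (of_real gm) = (complex_of_real t)^2" using Hhh[OF gm(1,2)] gm(3) by simp
    then have "Gam (of_real t) = G (H (of_real gm))" unfolding Gam_def by simp
    also have "\<dots> = of_real gm" using G(2) inS'[OF gm(1,2)] by simp
    finally have 1: "Gam (of_real t) = of_real gm" .
    have tpos: "t > 0" using t rho by auto
    have "(phi gm)^2 = t^2" using gm(3) hh_def by simp
    then have "phi gm = t" using tpos by (simp add: phi_def power2_eq_iff_nonneg)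
    then show ?thesis using 1 gm(1) a0 by auto
  qed
  show ?thesis
    by (rule that[OF rho(1) r(1) r(2)]) (use holGam Gam_in Gam_real e0_def in auto)
qed

end

lemma geom_prod_summable:
  fixes C a b :: real
  assumes C: "C \<ge> 0" and a: "0 \<le> a" "a < 1" and b: "0 \<le> b" "b < 1"
  shows "(\<lambda>(n,k). C * a^n * b^k) summable_on (UNIV \<times> UNIV)"
proof -
  have rows: "((\<lambda>k. (\<lambda>(n,k). C * a^n * b^k) (n, k)) has_sum (C * a^n / (1 - b))) UNIV" for n
  proof -
    have "(\<lambda>k. C * a^n * b^k) sums (C * a^n * (1 / (1 - b)))"
      by (rule sums_mult[OF geometric_sums]) (use b in simp)
    then have "(\<lambda>k. C * a^n * b^k) sums (C * a^n / (1 - b))" by simp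
    then show ?thesis by (simp, intro sums_nonneg_imp_has_sum) (use C a b in auto)
  qed
  have g: "(\<lambda>n. C * a^n / (1 - b)) summable_on UNIV"
  proof -
    have "(\<lambda>n. C / (1 - b) * a^n) sums (C / (1 - b) * (1 / (1 - a)))"
      by (rule sums_mult[OF geometric_sums]) (use a in simp)
    then have "((\<lambda>n. C / (1 - b) * a^n) has_sum (C / (1 - b) * (1 / (1 - a)))) UNIV"
      by (intro sums_nonneg_imp_has_sum) (use C a b in auto)
    then show ?thesis unfolding summable_on_def by (auto simp: algebra_simps)
  qed
  have "(\<lambda>(n,k). C * a^n * b^k) summable_on Sigma UNIV (\<lambda>_. UNIV)"
    by (rule summable_on_SigmaI[OF rows g]) (use C a b in auto)
  then show ?thesis by simp
qed

lemma double_series_swap: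
  fixes Fv :: "nat \<Rightarrow> nat \<Rightarrow> 'a::banach"
  assumes bound: "\<And>n k. norm (Fv n k) \<le> C * q^n * p^k"
    and q: "0 \<le> q" "q < 1" and p: "0 \<le> p" "p < 1"
    and rows: "\<And>n. (\<lambda>k. Fv n k) sums S n" and tot: "S sums L"
  shows "(\<lambda>k. \<Sum>n. Fv n k) sums L"
proof -
  have C: "C \<ge> 0" using bound[of 0 0] by simp (meson norm_ge_zero order.trans)
  have sA: "(\<lambda>(n,k). Fv n k) summable_on (UNIV \<times> UNIV)"
  proof (rule abs_summable_summable)
    show "(\<lambda>(n,k). Fv n k) abs_summable_on (UNIV \<times> UNIV)"
      by (rule Infinite_Sum.abs_summable_on_comparison_test'[OF geom_prod_summable[OF C q p]]) (auto simp: bound)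
  qed
  have sB: "(\<lambda>(k,n). Fv n k) summable_on (UNIV \<times> UNIV)"
  proof (rule abs_summable_summable)
    have "(\<lambda>(k,n). C * p^k * q^n) summable_on (UNIV \<times> UNIV)" by (rule geom_prod_summable[OF C p q])
    then show "(\<lambda>(k,n). Fv n k) abs_summable_on (UNIV \<times> UNIV)"
    proof (rule Infinite_Sum.abs_summable_on_comparison_test')
      fix x :: "nat \<times> nat" assume "x \<in> UNIV \<times> UNIV"
      obtain k n where x: "x = (k, n)" by (cases x)
      show "norm ((\<lambda>(k,n). Fv n k) x) \<le> (\<lambda>(k,n). C * p^k * q^n) x"
        unfolding x using bound[of n k] by (simp add: mult_ac)
    qed
  qed
  have rowsum: "infsum (\<lambda>k. Fv n k) UNIV = S n" for n
  proof -
    have "summable (\<lambda>k. norm (Fv n k))"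
      by (rule summable_comparison_test'[where N=0, OF summable_mult[OF summable_geometric[of p]], of _ "C * q^n"])
         (use p bound in \<open>auto simp: mult.assoc\<close>)
    then show ?thesis using norm_summable_imp_has_sum rows infsumI by blast
  qed
  have colsum: "infsum (\<lambda>n. Fv n k) UNIV = (\<Sum>n. Fv n k)" for k
  proof -
    have ns: "summable (\<lambda>n. norm (Fv n k))"
      by (rule summable_comparison_test'[where N=0, OF summable_mult2[OF summable_geometric[of q]], of _ "C * p^k"])
         (use q bound in \<open>auto simp: algebra_simps\<close>)
    then have "summable (\<lambda>n. Fv n k)" by (rule summable_norm_cancel)
    then show ?thesis using norm_summable_imp_has_sum[OF ns] summable_sums infsumI by blast
  qed
  have Ssum: "S summable_on UNIV"
    using summable_on_Sigma_banach[OF sA[unfolded UNIV_Times_UNIV[symmetric]]] rowsum by simp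
  then have "S sums infsum S UNIV" by (simp add: has_sum_imp_sums)
  then have SL: "infsum S UNIV = L" using tot sums_unique2 by blast
  have swap: "infsum (\<lambda>n. infsum (\<lambda>k. Fv n k) UNIV) UNIV = infsum (\<lambda>k. infsum (\<lambda>n. Fv n k) UNIV) UNIV"
    by (rule infsum_swap_banach) (use sA in simp)
  have colS: "(\<lambda>k. infsum (\<lambda>n. Fv n k) UNIV) summable_on UNIV"
    using summable_on_Sigma_banach[of "\<lambda>k n. Fv n k" UNIV "\<lambda>_. UNIV"] sB by simp
  then have "(\<lambda>k. infsum (\<lambda>n. Fv n k) UNIV) sums infsum (\<lambda>k. infsum (\<lambda>n. Fv n k) UNIV) UNIV"
    by (simp add: has_sum_imp_sums)
  moreover have "infsum (\<lambda>k. infsum (\<lambda>n. Fv n k) UNIV) UNIV = L"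
    using swap rowsum SL by simp
  ultimately show ?thesis using colsum by simp
qed

context prob0 begin

lemma local_analytic:
  assumes e0pos: "phi g0 > 0"
  shows "\<exists>R>0. \<exists>A::nat \<Rightarrow> 'a. \<forall>t. \<bar>t - phi g0\<bar> < R \<longrightarrow>
           (\<lambda>k. ((t - phi g0)^k) *\<^sub>R A k) sums extremal_vector T x0 t"
proof -
  define e0 where "e0 = phi g0"
  obtain rho r Gam where rho: "rho > 0" and r: "r > 0" "r \<le> g0/2"
    and holG: "Gam holomorphic_on ball (of_real e0) rho"
    and Gin: "\<And>w. w \<in> ball (of_real e0) rho \<Longrightarrow> Gam w \<in> ball (of_real g0) r"
    and Greal: "\<And>t. \<bar>t - e0\<bar> < rho \<Longrightarrow> \<exists>gm. Gam (of_real t) = of_real gm \<and> gm > 0 \<and> phi gm = t"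
    using inverse_local[OF e0pos] unfolding e0_def by metis
  define r2 where "r2 = rho / 2"
  have r2: "r2 > 0" "r2 < rho" using rho unfolding r2_def by auto
  define D where "D n w = (complex_of_real g0 - Gam w)^n" for n w
  have holD: "D n holomorphic_on ball (of_real e0) rho" for n
    unfolding D_def by (intro holomorphic_intros holG)
  have boundD: "cmod (D n w) \<le> r^n" if w: "w \<in> ball (of_real e0) rho" for n w
  proof -
    have "cmod (complex_of_real g0 - Gam w) < r" using Gin[OF w] by (simp add: dist_norm)
    then show ?thesis unfolding D_def norm_power by (intro power_mono) auto
  qed
  define c where "c n k = (deriv ^^ k) (D n) (of_real e0) / fact k" for n k
  have cbound: "cmod (c n k) \<le> 2 * r^n / r2^k" for n k
  proof (cases "k = 0")
    case True
    have "e0 \<in> ball e0 rho" using rho by simp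
    then have "cmod (D n (of_real e0)) \<le> r^n" using boundD rho by simp
    moreover have "r^n \<le> 2 * r^n" using r by simp
    ultimately have "cmod (D n (of_real e0)) \<le> 2 * r^n" by linarith
    then show ?thesis using True unfolding c_def by simp
  next
    case False
    have hol2: "D n holomorphic_on ball (of_real e0) r2"
      using holD by (rule holomorphic_on_subset) (use r2 in auto)
    have "continuous_on (ball (of_real e0) rho) (D n)" using holD by (rule holomorphic_on_imp_continuous_on)
    then have cont2: "continuous_on (cball (of_real e0) r2) (D n)"
      by (rule continuous_on_subset) (use r2 in auto)
    have inb: "D n w \<in> ball 0 (2 * r^n)" if "w \<in> ball (of_real e0) r2" for w
    proof -
      have "w \<in> ball (of_real e0) rho" using that r2 by auto
      then have "cmod (D n w) \<le> r^n" by (rule boundD)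
      moreover have "r^n < 2 * r^n" using r by simp
      ultimately show ?thesis by simp
    qed
    have "cmod ((deriv ^^ k) (D n) (of_real e0)) \<le> fact k * (2 * r^n) / r2^k"
      using Cauchy_higher_deriv_bound[OF hol2 cont2 inb r2(1)] False by simp
    then show ?thesis unfolding c_def by (simp add: norm_divide field_simps)
  qed
  define A where "A k = (\<Sum>n. Re (c n k) *\<^sub>R u n)" for k
  have unorm: "norm (u n) \<le> norm (u 0) / g0^n" for n by (rule u_norm)
  have rg: "r / g0 \<le> 1/2" using r g0 by (simp add: field_simps)
  have Asum: "summable (\<lambda>n. Re (c n k) *\<^sub>R u n)" for k
  proof (rule summable_comparison_test'[where N=0])
    show "summable (\<lambda>n. (2 * norm (u 0) / r2^k) * (1/2)^n)" by (intro summable_mult summable_geometric) simp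
    fix n :: nat
    have "norm (Re (c n k) *\<^sub>R u n) \<le> cmod (c n k) * norm (u n)"
      by (simp add: abs_Re_le_cmod mult_right_mono)
    also have "\<dots> \<le> (2 * r^n / r2^k) * (norm (u 0) / g0^n)"
      by (intro mult_mono cbound unorm) (use r r2 in auto)
    also have "\<dots> = (2 * norm (u 0) / r2^k) * (r / g0)^n" by (simp add: power_divide)
    also have "\<dots> \<le> (2 * norm (u 0) / r2^k) * (1/2)^n"
      by (intro mult_left_mono power_mono rg) (use r g0 r2 in auto)
    finally show "norm (Re (c n k) *\<^sub>R u n) \<le> (2 * norm (u 0) / r2^k) * (1/2)^n" .
  qed
  have main: "(\<lambda>k. ((t - e0)^k) *\<^sub>R A k) sums extremal_vector T x0 t" if t: "\<bar>t - e0\<bar> < rho / 4" for t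
  proof -
    have trho: "\<bar>t - e0\<bar> < rho" using t rho by simp
    obtain gm where gm: "Gam (of_real t) = of_real gm" "gm > 0" "phi gm = t" using Greal[OF trho] by blast
    have tin: "complex_of_real t \<in> ball (of_real e0) rho"
      using trho by (simp add: dist_norm cmod_of_real_diff abs_minus_commute)
    have "Gam (of_real t) \<in> ball (of_real g0) r" by (rule Gin[OF tin])
    then have gmr: "\<bar>gm - g0\<bar> < r" using gm(1) by (simp add: dist_norm cmod_of_real_diff abs_minus_commute)
    have ext: "extremal_vector T x0 t = yy gm" by (rule extremal_eq[OF gm(2,3)])
    define Fv where "Fv n k = (Re (c n k) * (t - e0)^k) *\<^sub>R u n" for n k
    have rows: "(\<lambda>k. Fv n k) sums ((g0 - gm)^n *\<^sub>R u n)" for n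
    proof -
      have "(\<lambda>k. c n k * (of_real t - of_real e0)^k) sums D n (of_real t)"
        using holomorphic_power_series[OF holD tin] unfolding c_def by simp
      then have "(\<lambda>k. Re (c n k * (of_real t - of_real e0)^k)) sums Re (D n (of_real t))"
        by (rule sums_Re)
      moreover have "Re (c n k * (of_real t - of_real e0)^k) = Re (c n k) * (t - e0)^k" for k
      proof -
        have "(complex_of_real t - of_real e0)^k = of_real ((t - e0)^k)" by simp
        then show ?thesis by simp
      qed
      moreover have "Re (D n (of_real t)) = (g0 - gm)^n"
      proof -
        have "D n (of_real t) = of_real ((g0 - gm)^n)" unfolding D_def gm(1) by simp
        then show ?thesis by simp
      qed
      ultimately have "(\<lambda>k. Re (c n k) * (t - e0)^k) sums (g0 - gm)^n" by simp
      then show ?thesis unfolding Fv_def by (rule sums_scaleR_left)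
    qed
    have tot: "(\<lambda>n. (g0 - gm)^n *\<^sub>R u n) sums yy gm"
      by (rule y_series) (use gmr r g0 in simp)
    have bound: "norm (Fv n k) \<le> (2 * norm (u 0)) * (1/2)^n * (1/2)^k" for n k
    proof -
      have tr: "\<bar>t - e0\<bar> / r2 \<le> 1/2" using t rho unfolding r2_def by (simp add: field_simps)
      have "norm (Fv n k) = \<bar>Re (c n k)\<bar> * \<bar>t - e0\<bar>^k * norm (u n)"
        unfolding Fv_def by (simp add: abs_mult power_abs)
      also have "\<dots> \<le> (2 * r^n / r2^k) * \<bar>t - e0\<bar>^k * (norm (u 0) / g0^n)"
        by (intro mult_mono cbound unorm order.trans[OF abs_Re_le_cmod]) (use r r2 in auto)
      also have "\<dots> = (2 * norm (u 0)) * (r / g0)^n * (\<bar>t - e0\<bar> / r2)^k"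
        by (simp add: power_divide mult_ac)
      also have "\<dots> \<le> (2 * norm (u 0)) * (1/2)^n * (1/2)^k"
        by (intro mult_mono power_mono rg tr) (use r g0 r2 in auto)
      finally show ?thesis .
    qed
    have "(\<lambda>k. \<Sum>n. Fv n k) sums yy gm"
      by (rule double_series_swap[OF bound _ _ _ _ rows tot]) auto
    moreover have "(\<Sum>n. Fv n k) = ((t - e0)^k) *\<^sub>R A k" for k
    proof -
      have "(\<Sum>n. Fv n k) = (\<Sum>n. ((t - e0)^k) *\<^sub>R (Re (c n k) *\<^sub>R u n))"
        unfolding Fv_def by (simp add: mult.commute)
      also have "\<dots> = ((t - e0)^k) *\<^sub>R A k"
        unfolding A_def by (rule suminf_scaleR_right[OF Asum, symmetric])
      finally show ?thesis .
    qed
    ultimately show ?thesis using ext by simp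
  qed
  show ?thesis
    using main rho unfolding e0_def by (intro exI[of _ "rho/4"] conjI exI[of _ A]) auto
qed

end

instance complex_hilbert \<subseteq> banach ..

theorem mainTheorem6:
  fixes T :: "'a::complex_hilbert \<Rightarrow> 'a" and x0 :: 'a
  assumes "separable_space TYPE('a)"
    and "infinite_dimensional TYPE('a)"
    and "bounded_clinear_op T"
    and "closure (range T) = UNIV"
    and "x0 \<noteq> 0"
  shows "real_analytic_on (\<lambda>\<epsilon>. extremal_vector T x0 \<epsilon>) {0<..<norm x0}"
proof -
  have bT: "bounded_linear T" using assms(3) unfolding bounded_clinear_op_def by simp
  interpret P: prob T x0 by (rule prob.intro[OF bT assms(4) assms(5)])
  show ?thesis unfolding real_analytic_on_def
  proof
    fix t0 assume t0: "t0 \<in> {0<..<norm x0}"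
    obtain g0 where g0: "g0 > 0" "P.phi g0 = t0" using P.exists_gamma t0 by auto
    interpret Q: prob0 T x0 g0 by (rule prob0.intro[OF P.prob_axioms]) (rule prob0_axioms.intro[OF g0(1)])
    have "P.phi g0 > 0" using g0 t0 by simp
    from Q.local_analytic[OF this] g0(2)
    show "\<exists>r>0. \<exists>a. \<forall>t. \<bar>t - t0\<bar> < r \<longrightarrow> (\<lambda>n. (t - t0) ^ n *\<^sub>R a n) sums extremal_vector T x0 t"
      by simp
  qed
qed

end
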